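(* Let $\Gamma=\langle x,y\mid xy^{-1}=yx^{-1}\rangle$ with generating set $\Delta=\{x,y\}$. The operator $W=W_xU_x+W_yU_y$ on $\ell^2(\Gamma)$ is a homogeneous scalar quantum walk on $C_\Delta(\Gamma)$ if and only if, up to a global phase, $W_x=\cos\phi$ and $W_y=i\sin\phi$ for some real $\phi$ (with both values nonzero). In particular, a homogeneous scalar quantum walk on $C_\Delta(\Gamma)$ exists.
   Context: The Cayley graph $C_\Delta(\Gamma)$ has vertex set $\Gamma$ and directed edges $(g,g\delta)$, $g\in\Gamma,\delta\in\Delta$. Let $\ell^2(\Gamma)$ have orthonormal basis $\{|g\rangle\}_{g\in\Gamma}$ and for $\delta\in\Gamma$ let $U_\delta|g\rangle=|g\delta\rangle$. A homogeneous scalar quantum walk on $C_\Delta(\Gamma)$ is a unitary operator $W=\sum_{\delta\in\Delta}W_\delta U_\delta$ with all complex coefficients $W_\delta$ nonzero. "Up to a global phase" means that all coefficients may be multiplied by a common complex number of modulus one. *)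

theory Defs
  imports "HOL-Analysis.Analysis"
begin

datatype gen = Gx | Gy

text \<open>A letter is a generator together with an exponent flag: (g, False) is g, (g, True) is g^-1.\<close>
type_synonym letter = "gen \<times> bool"

definition inv_letter :: "letter \<Rightarrow> letter" where
  "inv_letter a = (fst a, \<not> snd a)"

inductive pres_step :: "letter list \<Rightarrow> letter list \<Rightarrow> bool" where
  cancel: "pres_step (u @ [a, inv_letter a] @ v) (u @ v)"
| relat:  "pres_step (u @ [(Gx, False), (Gy, True)] @ v) (u @ [(Gy, False), (Gx, True)] @ v)"

definition pres_eq :: "letter list \<Rightarrow> letter list \<Rightarrow> bool" where
  "pres_eq = equivclp pres_step"

quotient_type gamma = "letter list" / pres_eq
  unfolding pres_eq_def by simp

lemma pres_step_append: "pres_step w v \<Longrightarrow> pres_step (w @ [a]) (v @ [a])"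
proof (induction rule: pres_step.induct)
  case (cancel u b v)
  then show ?case using pres_step.cancel[of u b "v @ [a]"] by simp
next
  case (relat u v)
  then show ?case using pres_step.relat[of u "v @ [a]"] by simp
qed

lemma pres_eq_append: "pres_eq w v \<Longrightarrow> pres_eq (w @ [a]) (v @ [a])"
  unfolding pres_eq_def
proof (induction rule: equivclp_induct)
  case base
  then show ?case by simp
next
  case (step y z)
  then show ?case
    by (meson equivclp_into_equivclp pres_step_append)
qed

lift_definition rmul :: "gamma \<Rightarrow> letter \<Rightarrow> gamma" is "\<lambda>w a. w @ [a]"
  by (rule pres_eq_append)

definition ell2 :: "(gamma \<Rightarrow> complex) \<Rightarrow> bool" where
  "ell2 f \<longleftrightarrow> (\<lambda>g. (cmod (f g))\<^sup>2) summable_on UNIV"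

definition ell2_normsq :: "(gamma \<Rightarrow> complex) \<Rightarrow> real" where
  "ell2_normsq f = infsum (\<lambda>g. (cmod (f g))\<^sup>2) UNIV"

text \<open>U_d |g> = |g d>, so (U_d f)(h) = f(h d^-1).\<close>
definition U_op :: "letter \<Rightarrow> (gamma \<Rightarrow> complex) \<Rightarrow> (gamma \<Rightarrow> complex)" where
  "U_op d f = (\<lambda>h. f (rmul h (inv_letter d)))"

definition x_gen :: letter where "x_gen = (Gx, False)"
definition y_gen :: letter where "y_gen = (Gy, False)"

definition walk_op :: "complex \<Rightarrow> complex \<Rightarrow> (gamma \<Rightarrow> complex) \<Rightarrow> (gamma \<Rightarrow> complex)" where
  "walk_op Wx Wy f = (\<lambda>h. Wx * U_op x_gen f h + Wy * U_op y_gen f h)"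

text \<open>Unitary operator on l^2: a norm-preserving map of l^2 onto l^2 (for linear maps
  this is equivalent to W^* W = W W^* = I).\<close>
definition unitary_l2 :: "((gamma \<Rightarrow> complex) \<Rightarrow> (gamma \<Rightarrow> complex)) \<Rightarrow> bool" where
  "unitary_l2 W \<longleftrightarrow>
     (\<forall>f. ell2 f \<longrightarrow> ell2 (W f) \<and> ell2_normsq (W f) = ell2_normsq f) \<and>
     (\<forall>g. ell2 g \<longrightarrow> (\<exists>f. ell2 f \<and> W f = g))"

definition hom_scalar_qw :: "complex \<Rightarrow> complex \<Rightarrow> bool" where
  "hom_scalar_qw Wx Wy \<longleftrightarrow> Wx \<noteq> 0 \<and> Wy \<noteq> 0 \<and> unitary_l2 (walk_op Wx Wy)"

end

theory Submission
  imports Defs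
begin

lemma pres_eq_stepI: "pres_step w v \<Longrightarrow> pres_eq w v"
  unfolding pres_eq_def by (rule r_into_equivclp)

lemma rmul_cancel1[simp]: "rmul (rmul h (g, False)) (g, True) = h"
proof (transfer)
  fix w g
  have "pres_step (w @ [(g,False), inv_letter (g,False)] @ []) (w @ [])"
    by (rule pres_step.cancel)
  then show "pres_eq ((w @ [(g, False)]) @ [(g, True)]) w"
    by (intro pres_eq_stepI) (simp add: inv_letter_def)
qed

lemma rmul_cancel2[simp]: "rmul (rmul h (g, True)) (g, False) = h"
proof (transfer)
  fix w g
  have "pres_step (w @ [(g,True), inv_letter (g,True)] @ []) (w @ [])"
    by (rule pres_step.cancel)
  then show "pres_eq ((w @ [(g, True)]) @ [(g, False)]) w"
    by (intro pres_eq_stepI) (simp add: inv_letter_def)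
qed

lemma rmul_rel: "rmul (rmul h (Gx, False)) (Gy, True) = rmul (rmul h (Gy, False)) (Gx, True)"
proof (transfer)
  fix w
  have "pres_step (w @ [(Gx, False), (Gy, True)] @ []) (w @ [(Gy, False), (Gx, True)] @ [])"
    by (rule pres_step.relat)
  then show "pres_eq ((w @ [(Gx, False)]) @ [(Gy, True)]) ((w @ [(Gy, False)]) @ [(Gx, True)])"
    by (intro pres_eq_stepI) simp
qed

definition par :: "letter list \<Rightarrow> bool" where
  "par w = even (length (filter (\<lambda>a. fst a = Gx) w))"

lemma par_step: "pres_step w v \<Longrightarrow> par w = par v"
  by (induction rule: pres_step.induct) (auto simp: par_def inv_letter_def)

lemma par_eq: "pres_eq w v \<Longrightarrow> par w = par v"
  unfolding pres_eq_def
proof (induction rule: equivclp_induct)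
  case base then show ?case by simp
next
  case (step y z) then show ?case using par_step by metis
qed

lift_definition gpar :: "gamma \<Rightarrow> bool" is par by (rule par_eq)

lemma gpar_rmul: "gpar (rmul h (g, b)) = (if g = Gx then \<not> gpar h else gpar h)"
  by transfer (auto simp: par_def)

lift_definition e :: gamma is "[]" .

lemma gpar_e: "gpar e" by transfer (simp add: par_def)


lemma cmod_sq_add: "(cmod (z + w))\<^sup>2 = (cmod z)\<^sup>2 + (cmod w)\<^sup>2 + 2 * Re (z * cnj w)"
  by (simp only: cmod_power2) (simp add: power2_eq_square algebra_simps)

lemma pair_id:
  fixes a b u v :: complex
  assumes "(cmod a)\<^sup>2 + (cmod b)\<^sup>2 = 1" "Re (a * cnj b) = 0"
  shows "(cmod (a * u + b * v))\<^sup>2 + (cmod (a * v + b * u))\<^sup>2 = (cmod u)\<^sup>2 + (cmod v)\<^sup>2"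
proof -
  have "(cmod (a * u + b * v))\<^sup>2 + (cmod (a * v + b * u))\<^sup>2
     = ((cmod a)\<^sup>2 + (cmod b)\<^sup>2) * ((cmod u)\<^sup>2 + (cmod v)\<^sup>2) + 4 * Re (a * cnj b) * Re (u * cnj v)"
    by (simp only: cmod_power2) (simp add: power2_eq_square algebra_simps)
  then show ?thesis using assms by simp
qed

lemma core:
  fixes f :: "gamma \<Rightarrow> complex" and a b :: complex
  assumes p: "bij p" and tt: "\<And>k. \<tau> (\<tau> k) = k" and q: "\<And>h. q h = \<tau> (p h)"
    and ab: "(cmod a)\<^sup>2 + (cmod b)\<^sup>2 = 1" "Re (a * cnj b) = 0" and f: "ell2 f"
  shows "ell2 (\<lambda>h. a * f (p h) + b * f (q h)) \<and> ell2_normsq (\<lambda>h. a * f (p h) + b * f (q h)) = ell2_normsq f"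
proof -
  define F where "F k = (cmod (f k))\<^sup>2" for k
  define g where "g k = (cmod (a * f k + b * f (\<tau> k)))\<^sup>2" for k
  have bt: "bij \<tau>" using tt by (rule involuntory_imp_bij)
  have Fs: "F summable_on UNIV" using f unfolding ell2_def F_def by simp
  have Fts: "(\<lambda>k. F (\<tau> k)) summable_on UNIV"
    using summable_on_reindex_bij_betw[OF bt] Fs by blast
  have pt: "g k + g (\<tau> k) = F k + F (\<tau> k)" for k
    unfolding g_def F_def tt using pair_id[OF ab, of "f k" "f (\<tau> k)"] by simp
  have FF: "(\<lambda>k. F k + F (\<tau> k)) summable_on UNIV" using Fs Fts by (rule summable_on_add)
  have gs: "g summable_on UNIV"
  proof (rule summable_on_comparison_test[OF FF])
    fix k
    have "0 \<le> g (\<tau> k)" by (simp add: g_def)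
    then show "g k \<le> F k + F (\<tau> k)" using pt[of k] by linarith
    show "0 \<le> g k" by (simp add: g_def)
  qed
  have gts: "(\<lambda>k. g (\<tau> k)) summable_on UNIV"
    using summable_on_reindex_bij_betw[OF bt] gs by blast
  have fun_eq: "(\<lambda>h. (cmod (a * f (p h) + b * f (q h)))\<^sup>2) = (\<lambda>h. g (p h))"
    by (simp add: g_def q)
  have s1: "ell2 (\<lambda>h. a * f (p h) + b * f (q h))"
    unfolding ell2_def fun_eq using summable_on_reindex_bij_betw[OF p] gs by blast
  have e1: "ell2_normsq (\<lambda>h. a * f (p h) + b * f (q h)) = infsum g UNIV"
    unfolding ell2_normsq_def fun_eq using infsum_reindex_bij_betw[OF p] by blast
  have e2: "infsum g UNIV = infsum (\<lambda>k. g (\<tau> k)) UNIV"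
    using infsum_reindex_bij_betw[OF bt, of g] by simp
  have "2 * infsum g UNIV = infsum g UNIV + infsum (\<lambda>k. g (\<tau> k)) UNIV" using e2 by simp
  also have "\<dots> = infsum (\<lambda>k. g k + g (\<tau> k)) UNIV" using infsum_add[OF gs gts] by simp
  also have "\<dots> = infsum (\<lambda>k. F k + F (\<tau> k)) UNIV" using pt by simp
  also have "\<dots> = infsum F UNIV + infsum (\<lambda>k. F (\<tau> k)) UNIV" using infsum_add[OF Fs Fts] by simp
  also have "infsum (\<lambda>k. F (\<tau> k)) UNIV = infsum F UNIV"
    using infsum_reindex_bij_betw[OF bt, of F] by simp
  finally have "infsum g UNIV = infsum F UNIV" by simp
  then show ?thesis using s1 e1 unfolding ell2_normsq_def F_def by simp
qed


lemma rmul_iff[simp]: "(rmul h (g, True) = k) = (h = rmul k (g, False))"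
  by (metis rmul_cancel1 rmul_cancel2)

lemma bij_rmul: "bij (\<lambda>h. rmul h (g, c))"
proof (cases c)
  case True
  show ?thesis using True
    by (intro o_bij[of "\<lambda>h. rmul h (g, False)"]) (auto simp: fun_eq_iff)
next
  case False
  show ?thesis using False
    by (intro o_bij[of "\<lambda>h. rmul h (g, True)"]) (auto simp: fun_eq_iff)
qed

lemma walk_eq: "walk_op a b f = (\<lambda>h. a * f (rmul h (Gx, True)) + b * f (rmul h (Gy, True)))"
  by (simp add: walk_op_def U_op_def x_gen_def y_gen_def inv_letter_def)

lemma key: "rmul (rmul h (Gx,True)) (Gy,False) = rmul (rmul h (Gy,True)) (Gx,False)"
proof -
  define m where "m = rmul (rmul h (Gy,True)) (Gx,True)"
  have h: "h = rmul (rmul m (Gx,False)) (Gy,False)" by (simp add: m_def)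
  show ?thesis unfolding h by (simp add: rmul_rel[symmetric])
qed

lemma unitary_if:
  assumes ab: "(cmod a)\<^sup>2 + (cmod b)\<^sup>2 = 1" "Re (a * cnj b) = 0"
  shows "unitary_l2 (walk_op a b)"
  unfolding unitary_l2_def
proof (intro conjI allI impI)
  fix f :: "gamma \<Rightarrow> complex" assume f: "ell2 f"
  have c: "ell2 (\<lambda>h. a * f (rmul h (Gx, True)) + b * f (rmul h (Gy, True))) \<and>
      ell2_normsq (\<lambda>h. a * f (rmul h (Gx, True)) + b * f (rmul h (Gy, True))) = ell2_normsq f"
    by (rule core[where \<tau> = "\<lambda>k. rmul (rmul k (Gx,False)) (Gy,True)", OF bij_rmul _ _ ab f])
       (simp_all add: rmul_rel)
  show "ell2 (walk_op a b f)" "ell2_normsq (walk_op a b f) = ell2_normsq f"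
    using c by (simp_all add: walk_eq)
next
  fix g :: "gamma \<Rightarrow> complex" assume g: "ell2 g"
  define f where "f k = cnj a * g (rmul k (Gx, False)) + cnj b * g (rmul k (Gy, False))" for k
  have ab': "(cmod (cnj a))\<^sup>2 + (cmod (cnj b))\<^sup>2 = 1" "Re (cnj a * cnj (cnj b)) = 0"
    using ab by (simp_all add: mult.commute)
  have c: "ell2 (\<lambda>k. cnj a * g (rmul k (Gx, False)) + cnj b * g (rmul k (Gy, False))) \<and>
     ell2_normsq (\<lambda>k. cnj a * g (rmul k (Gx, False)) + cnj b * g (rmul k (Gy, False))) = ell2_normsq g"
    by (rule core[where \<tau> = "\<lambda>k. rmul (rmul k (Gx,True)) (Gy,False)", OF bij_rmul _ _ ab' g])
       (simp_all add: rmul_rel[symmetric])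
  have "walk_op a b f = g"
  proof
    fix h
    have "walk_op a b f h = (a * cnj a + b * cnj b) * g h
        + (a * cnj b + cnj (a * cnj b)) * g (rmul (rmul h (Gx,True)) (Gy,False))"
      by (simp add: walk_eq f_def key algebra_simps)
    also have "a * cnj b + cnj (a * cnj b) = 0"
      unfolding complex_add_cnj using ab(2) by simp
    also have "a * cnj a + b * cnj b = 1"
    proof -
      have "a * cnj a + b * cnj b = of_real ((cmod a)\<^sup>2 + (cmod b)\<^sup>2)"
        by (simp only: of_real_add complex_norm_square)
      then show ?thesis using ab(1) by simp
    qed
    finally show "walk_op a b f h = g h" by simp
  qed
  moreover have "ell2 f" using c unfolding f_def[abs_def] by (rule conjunct1)
  ultimately show "\<exists>f. ell2 f \<and> walk_op a b f = g" by blast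
qed


definition tp :: "gamma \<Rightarrow> gamma \<Rightarrow> complex \<Rightarrow> complex \<Rightarrow> gamma \<Rightarrow> complex" where
  "tp u v c d h = c * (if h = u then 1 else 0) + d * (if h = v then 1 else 0)"

lemma tp_norm:
  assumes uv: "u \<noteq> v"
  shows "ell2 (tp u v c d) \<and> ell2_normsq (tp u v c d) = (cmod c)\<^sup>2 + (cmod d)\<^sup>2"
proof -
  let ?F = "\<lambda>h. (cmod (tp u v c d h))\<^sup>2"
  have z: "\<And>x. x \<in> UNIV - {u,v} \<Longrightarrow> ?F x = 0" by (auto simp: tp_def)
  have "?F summable_on UNIV \<longleftrightarrow> ?F summable_on {u,v}"
    by (rule summable_on_cong_neutral) (use z in auto)
  moreover have "infsum ?F UNIV = infsum ?F {u,v}"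
    by (rule infsum_cong_neutral) (use z in auto)
  ultimately show ?thesis using uv unfolding ell2_def ell2_normsq_def
    by (simp add: tp_def)
qed

lemma only_if:
  assumes u: "unitary_l2 (walk_op a b)"
  shows "(cmod a)\<^sup>2 + (cmod b)\<^sup>2 = 1 \<and> Re (a * cnj b) = 0"
proof -
  define X where "X = rmul e (Gx, False)"
  define Y where "Y = rmul e (Gy, False)"
  define G where "G = rmul (rmul e (Gy, False)) (Gx, True)"
  have pX: "\<not> gpar X" and pY: "gpar Y" and pG: "\<not> gpar G"
    by (simp_all add: X_def Y_def G_def gpar_rmul gpar_e)
  have XY: "X \<noteq> Y" using pX pY by auto
  have eG: "e \<noteq> G" using pG gpar_e by auto
  have GX: "rmul G (Gx, False) = Y" by (simp add: G_def Y_def)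
  have GY: "rmul G (Gy, False) = X" by (simp add: G_def X_def rmul_rel[symmetric])
  have W1: "walk_op a b (tp e G 1 0) = tp X Y a b"
    by (rule ext) (simp add: walk_eq tp_def X_def Y_def)
  have W2: "walk_op a b (tp e G 1 1) = tp X Y (a + b) (a + b)"
  proof
    fix h
    show "walk_op a b (tp e G 1 1) h = tp X Y (a + b) (a + b) h"
      using XY by (simp add: walk_eq tp_def X_def[symmetric] Y_def[symmetric] GX GY algebra_simps)
  qed
  have u1: "ell2_normsq (walk_op a b f) = ell2_normsq f" if "ell2 f" for f
    using u that unfolding unitary_l2_def by blast
  have n1: "(cmod a)\<^sup>2 + (cmod b)\<^sup>2 = 1"
  proof -
    have A: "ell2 (tp e G 1 0)" "ell2_normsq (tp e G 1 0) = 1"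
      using tp_norm[OF eG, of 1 0] by simp_all
    have B: "ell2_normsq (tp X Y a b) = (cmod a)\<^sup>2 + (cmod b)\<^sup>2"
      using tp_norm[OF XY, of a b] by simp
    show ?thesis using u1[OF A(1)] A(2) B W1 by simp
  qed
  have "2 * (cmod (a + b))\<^sup>2 = 2"
  proof -
    have A: "ell2 (tp e G 1 1)" "ell2_normsq (tp e G 1 1) = 2"
      using tp_norm[OF eG, of 1 1] by simp_all
    have B: "ell2_normsq (tp X Y (a+b) (a+b)) = 2 * (cmod (a+b))\<^sup>2"
      using tp_norm[OF XY, of "a+b" "a+b"] by simp
    show ?thesis using u1[OF A(1)] A(2) B W2 by simp
  qed
  then have "(cmod (a + b))\<^sup>2 = 1" by simp
  then have "Re (a * cnj b) = 0" using n1 cmod_sq_add[of a b] by simp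
  then show ?thesis using n1 by simp
qed


lemma polar_form:
  assumes ab: "(cmod a)\<^sup>2 + (cmod b)\<^sup>2 = 1" "Re (a * cnj b) = 0" and a0: "a \<noteq> 0" and b0: "b \<noteq> 0"
  shows "\<exists>\<omega> (\<phi>::real). cmod \<omega> = 1 \<and>
                a = \<omega> * complex_of_real (cos \<phi>) \<and>
                b = \<omega> * (\<i> * complex_of_real (sin \<phi>)) \<and>
                cos \<phi> \<noteq> 0 \<and> sin \<phi> \<noteq> 0"
proof -
  define \<omega> where "\<omega> = a / complex_of_real (cmod a)"
  have na: "cmod a \<noteq> 0" using a0 by simp
  have w1: "cmod \<omega> = 1" using na by (simp add: \<omega>_def norm_divide)
  have w0: "\<omega> \<noteq> 0" using w1 by auto
  have ww: "\<omega> * cnj \<omega> = 1"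
    using complex_norm_square[of \<omega>] w1 by simp
  have aw: "a = \<omega> * complex_of_real (cmod a)" using na by (simp add: \<omega>_def)
  define c where "c = b / \<omega>"
  have bw: "b = \<omega> * c" using w0 by (simp add: c_def)
  have "a * cnj b = complex_of_real (cmod a) * (\<omega> * cnj \<omega>) * cnj c"
    by (subst aw, subst bw) (simp add: algebra_simps)
  then have "a * cnj b = complex_of_real (cmod a) * cnj c" using ww by simp
  then have "Re (a * cnj b) = cmod a * Re c" by simp
  then have rc: "Re c = 0" using ab(2) na by simp
  then have cc: "c = \<i> * complex_of_real (Im c)" by (simp add: complex_eq_iff)
  have "cmod b = cmod c" using bw w1 by (simp add: norm_mult)
  moreover have "cmod c = \<bar>Im c\<bar>" using rc by (simp add: cmod_def)
  ultimately have "(cmod a)\<^sup>2 + (Im c)\<^sup>2 = 1" using ab(1) by (metis power2_abs)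
  then obtain \<phi> where ph: "cmod a = cos \<phi>" "Im c = sin \<phi>" by (rule sincos_total_2pi)
  have "Im c \<noteq> 0" using cc bw b0 by auto
  then show ?thesis
    using w1 aw bw cc ph na by (intro exI[of _ \<omega>] exI[of _ \<phi>]) auto
qed

theorem mainTheorem2:
  shows "(\<forall>Wx Wy. hom_scalar_qw Wx Wy \<longleftrightarrow>
            (\<exists>\<omega> (\<phi>::real). cmod \<omega> = 1 \<and>
                Wx = \<omega> * complex_of_real (cos \<phi>) \<and>
                Wy = \<omega> * (\<i> * complex_of_real (sin \<phi>)) \<and>
                cos \<phi> \<noteq> 0 \<and> sin \<phi> \<noteq> 0))
         \<and> (\<exists>Wx Wy. hom_scalar_qw Wx Wy)"
proof -
  have conv: "hom_scalar_qw (\<omega> * complex_of_real (cos \<phi>)) (\<omega> * (\<i> * complex_of_real (sin \<phi>)))"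
    if w: "cmod \<omega> = 1" and c: "cos \<phi> \<noteq> 0" and s: "sin \<phi> \<noteq> 0" for \<omega> and \<phi> :: real
  proof -
    have ww: "\<omega> * cnj \<omega> = 1" using complex_norm_square[of \<omega>] w by simp
    have n: "(cmod (\<omega> * complex_of_real (cos \<phi>)))\<^sup>2 + (cmod (\<omega> * (\<i> * complex_of_real (sin \<phi>))))\<^sup>2 = 1"
      using w by (simp add: norm_mult power_mult_distrib)
    have "\<omega> * complex_of_real (cos \<phi>) * cnj (\<omega> * (\<i> * complex_of_real (sin \<phi>)))
        = (\<omega> * cnj \<omega>) * (- \<i> * complex_of_real (cos \<phi> * sin \<phi>))"
      by (simp add: algebra_simps)
    then have r: "Re (\<omega> * complex_of_real (cos \<phi>) * cnj (\<omega> * (\<i> * complex_of_real (sin \<phi>)))) = 0"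
      using ww by simp
    have "\<omega> \<noteq> 0" using w by auto
    then show ?thesis unfolding hom_scalar_qw_def using unitary_if[OF n r] c s by simp
  qed
  have A: "hom_scalar_qw Wx Wy \<longleftrightarrow>
            (\<exists>\<omega> (\<phi>::real). cmod \<omega> = 1 \<and>
                Wx = \<omega> * complex_of_real (cos \<phi>) \<and>
                Wy = \<omega> * (\<i> * complex_of_real (sin \<phi>)) \<and>
                cos \<phi> \<noteq> 0 \<and> sin \<phi> \<noteq> 0)" for Wx Wy
  proof
    assume "hom_scalar_qw Wx Wy"
    then have "Wx \<noteq> 0" "Wy \<noteq> 0" "unitary_l2 (walk_op Wx Wy)" unfolding hom_scalar_qw_def by auto
    then show "\<exists>\<omega> (\<phi>::real). cmod \<omega> = 1 \<and>
                Wx = \<omega> * complex_of_real (cos \<phi>) \<and>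
                Wy = \<omega> * (\<i> * complex_of_real (sin \<phi>)) \<and>
                cos \<phi> \<noteq> 0 \<and> sin \<phi> \<noteq> 0"
      using only_if polar_form by blast
  next
    assume "\<exists>\<omega> (\<phi>::real). cmod \<omega> = 1 \<and>
                Wx = \<omega> * complex_of_real (cos \<phi>) \<and>
                Wy = \<omega> * (\<i> * complex_of_real (sin \<phi>)) \<and>
                cos \<phi> \<noteq> 0 \<and> sin \<phi> \<noteq> 0"
    then show "hom_scalar_qw Wx Wy" using conv by blast
  qed
  have c4: "cos (pi/4) \<noteq> 0" by (simp add: cos_45)
  have s4: "sin (pi/4) \<noteq> 0" by (simp add: sin_45)
  have "hom_scalar_qw (1 * complex_of_real (cos (pi/4))) (1 * (\<i> * complex_of_real (sin (pi/4))))"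
    by (rule conv) (use c4 s4 in auto)
  then show ?thesis using A by blast
qed

end
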